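(* Let $(M,g,J)$ be almost Hermitian of even complex dimension $m=2n\ge2$ with complex spinor bundle $S^cM$ of a spin$^c$ structure. Then the endomorphism $$-\mathbf{i}\gamma(\Omega)+(m+2)(m-1)\pi_{n-1}+m(m+1)\pi_n+(m+1)^2\mathrm{pr}_{\mathcal{V}^\perp}-(m+4)\beta_1^2\pi_{n-2}-(m+2)\beta_2^2\pi_{n+1}-m(m+1)\mathrm{Id}$$ is non-negative definite on $S^cM$.
   Context: $\Omega=g(\cdot,J\cdot)$; $\gamma$ is Clifford multiplication; $S^cM=S_0\oplus\cdots\oplus S_m$ with $S_j$ the eigenbundle of $\gamma(\Omega)$ for eigenvalue $\mathbf{i}(m-2j)$, orthogonal projections $\pi_j$ ($\pi_j=0$ if $j\notin\{0,\dots,m\}$). $\mathcal{V}=S_{n-1}\oplus S_n$, $\mathrm{pr}_{\mathcal{V}^\perp}$ the orthogonal projection onto the complement of $\mathcal{V}$. $\beta_1=m+1-(m+2)\sqrt{\frac{m-1}{m+1}}$, $\beta_2=m+1-m\sqrt{\frac{m+1}{m-1}}$. *)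

theory Defs
  imports "HOL-Analysis.Analysis" "Jordan_Normal_Form.Schur_Decomposition" "Jordan_Normal_Form.Char_Poly"
begin

text \<open>Fibrewise linear algebra of the spinor bundle: a fibre is modelled as
  complex column vectors of length N, endomorphisms as N x N complex matrices,
  the Hermitian product as  v \<bullet>c w  (linear in v, antilinear in w).\<close>

definition beta1 :: "nat \<Rightarrow> real" where
  "beta1 m = real m + 1 - (real m + 2) * sqrt ((real m - 1) / (real m + 1))"

definition beta2 :: "nat \<Rightarrow> real" where
  "beta2 m = real m + 1 - real m * sqrt ((real m + 1) / (real m - 1))"

definition eigsp :: "complex mat \<Rightarrow> complex \<Rightarrow> complex vec set" where
  "eigsp G c = {v \<in> carrier_vec (dim_row G). G *\<^sub>v v = c \<cdot>\<^sub>v v}"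

definition is_orth_proj :: "nat \<Rightarrow> complex mat \<Rightarrow> complex vec set \<Rightarrow> bool" where
  "is_orth_proj N P W \<longleftrightarrow> P \<in> carrier_mat N N \<and> P * P = P \<and> mat_adjoint P = P
     \<and> (\<lambda>w. P *\<^sub>v w) ` carrier_vec N = W"

definition orth_compl :: "nat \<Rightarrow> complex vec set \<Rightarrow> complex vec set" where
  "orth_compl N W = {v \<in> carrier_vec N. \<forall>w\<in>W. v \<bullet>c w = 0}"

end

theory Submission
  imports Defs
begin


lemma smult_mat_mult_vec':
  fixes A :: "complex mat"
  assumes "A \<in> carrier_mat N N" "v \<in> carrier_vec N"
  shows "(k \<cdot>\<^sub>m A) *\<^sub>v v = k \<cdot>\<^sub>v (A *\<^sub>v v)"
  using assms by (intro eq_vecI) auto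

lemma adj_carrier: "A \<in> carrier_mat N N \<Longrightarrow> mat_adjoint A \<in> carrier_mat N N"
  unfolding mat_adjoint_def by (auto simp: mat_of_rows_def)

lemma adj_index:
  fixes A :: "complex mat"
  assumes "A \<in> carrier_mat N N" "i < N" "j < N"
  shows "mat_adjoint A $$ (i,j) = cnj (A $$ (j,i))"
  using assms unfolding mat_adjoint_def by (auto simp: mat_of_rows_def)

lemma adj_sprod:
  fixes A :: "complex mat"
  assumes A: "A \<in> carrier_mat N N" and v: "v \<in> carrier_vec N" and w: "w \<in> carrier_vec N"
  shows "(A *\<^sub>v v) \<bullet>c w = v \<bullet>c (mat_adjoint A *\<^sub>v w)"
proof -
  have "(A *\<^sub>v v) \<bullet>c w = (\<Sum>i<N. (\<Sum>k<N. A $$ (i,k) * v $ k) * cnj (w $ i))"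
    using A v w by (simp add: scalar_prod_def mult_mat_vec_def row_def lessThan_atLeast0)
  also have "\<dots> = (\<Sum>i<N. \<Sum>k<N. A $$ (i,k) * v $ k * cnj (w $ i))"
    by (simp add: sum_distrib_right)
  also have "\<dots> = (\<Sum>k<N. \<Sum>i<N. A $$ (i,k) * v $ k * cnj (w $ i))"
    by (rule sum.swap)
  also have "\<dots> = (\<Sum>k<N. v $ k * cnj (\<Sum>i<N. mat_adjoint A $$ (k,i) * w $ i))"
    using A by (auto simp: adj_index sum_distrib_left mult_ac intro!: sum.cong)
  also have "\<dots> = v \<bullet>c (mat_adjoint A *\<^sub>v w)"
    using A v w adj_carrier[OF A] by (simp add: scalar_prod_def mult_mat_vec_def row_def lessThan_atLeast0)
  finally show ?thesis .
qed

lemma herm_sprod: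
  fixes A :: "complex mat"
  assumes A: "A \<in> carrier_mat N N" "mat_adjoint A = A" and v: "v \<in> carrier_vec N" and w: "w \<in> carrier_vec N"
  shows "(A *\<^sub>v v) \<bullet>c w = v \<bullet>c (A *\<^sub>v w)"
  using adj_sprod[OF A(1) v w] A(2) by simp

lemma mat_eq_on_vec:
  fixes A B :: "complex mat"
  assumes A: "A \<in> carrier_mat N N" and B: "B \<in> carrier_mat N N"
    and h: "\<And>v. v \<in> carrier_vec N \<Longrightarrow> A *\<^sub>v v = B *\<^sub>v v"
  shows "A = B"
proof (rule eq_matI)
  fix i j assume i: "i < dim_row B" and j: "j < dim_col B"
  have "A *\<^sub>v unit_vec N j = B *\<^sub>v unit_vec N j" by (rule h) simp
  hence "(A *\<^sub>v unit_vec N j) $ i = (B *\<^sub>v unit_vec N j) $ i" by simp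
  thus "A $$ (i, j) = B $$ (i, j)" using A B i j by simp
qed (use A B in auto)

lemma vec_eq_by_sprod:
  fixes x y :: "complex vec"
  assumes x: "x \<in> carrier_vec N" and y: "y \<in> carrier_vec N"
    and h: "\<And>w. w \<in> carrier_vec N \<Longrightarrow> x \<bullet>c w = y \<bullet>c w"
  shows "x = y"
proof -
  have "(x - y) \<bullet>c (x - y) = x \<bullet>c (x - y) - y \<bullet>c (x - y)"
    using x y by (simp add: minus_scalar_prod_distrib)
  also have "\<dots> = 0" using h[of "x - y"] x y by simp
  finally have z: "(x - y) \<bullet>c (x - y) = 0" .
  have "x - y = 0\<^sub>v N" proof -
    have c: "x - y \<in> carrier_vec N" using x y by simp
    show ?thesis using conjugate_square_eq_0_vec[OF c] \<open>(x - y) \<bullet>c (x - y) = 0\<close> by simp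
  qed
  hence "\<And>i. i < N \<Longrightarrow> (x - y) $ i = 0" by simp
  hence "\<And>i. i < N \<Longrightarrow> x $ i = y $ i" using x y by simp
  thus ?thesis using x y by (intro eq_vecI) auto
qed



lemma op_carrier: "is_orth_proj N P W \<Longrightarrow> P \<in> carrier_mat N N"
  unfolding is_orth_proj_def by auto

lemma op_range: "is_orth_proj N P W \<Longrightarrow> v \<in> carrier_vec N \<Longrightarrow> P *\<^sub>v v \<in> W"
  unfolding is_orth_proj_def by auto

lemma op_fix:
  fixes P :: "complex mat"
  assumes h: "is_orth_proj N P W" and u: "u \<in> W" shows "P *\<^sub>v u = u"
proof -
  from h have P: "P \<in> carrier_mat N N" and PP: "P * P = P" and r: "(\<lambda>w. P *\<^sub>v w) ` carrier_vec N = W"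
    unfolding is_orth_proj_def by auto
  from u r obtain w where w: "w \<in> carrier_vec N" and uw: "u = P *\<^sub>v w" by auto
  have "P *\<^sub>v u = (P * P) *\<^sub>v w" using P w uw by simp
  thus ?thesis using PP uw by simp
qed

lemma op_W_carrier: "is_orth_proj N P W \<Longrightarrow> W \<subseteq> carrier_vec N"
  unfolding is_orth_proj_def by auto

lemma op_sq:
  fixes P :: "complex mat"
  assumes h: "is_orth_proj N P W" and v: "v \<in> carrier_vec N"
  shows "(P *\<^sub>v v) \<bullet>c v = (P *\<^sub>v v) \<bullet>c (P *\<^sub>v v)"
proof -
  from h have P: "P \<in> carrier_mat N N" and adj: "mat_adjoint P = P"
    unfolding is_orth_proj_def by auto
  have pv: "P *\<^sub>v v \<in> carrier_vec N" using P v by simp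
  have "(P *\<^sub>v v) \<bullet>c (P *\<^sub>v v) = (P *\<^sub>v (P *\<^sub>v v)) \<bullet>c v"
    using herm_sprod[OF P adj pv v] by simp
  also have "P *\<^sub>v (P *\<^sub>v v) = P *\<^sub>v v" using op_fix[OF h op_range[OF h v]] .
  finally show ?thesis by simp
qed

lemma op_kill:
  fixes P :: "complex mat"
  assumes h: "is_orth_proj N P W" and v: "v \<in> carrier_vec N"
    and orth: "\<And>w. w \<in> W \<Longrightarrow> w \<bullet>c v = 0"
  shows "P *\<^sub>v v = 0\<^sub>v N"
proof -
  have P: "P \<in> carrier_mat N N" using op_carrier[OF h] .
  have pv: "P *\<^sub>v v \<in> carrier_vec N" using P v by simp
  have "(P *\<^sub>v v) \<bullet>c (P *\<^sub>v v) = 0"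
    using op_sq[OF h v] orth[OF op_range[OF h v]] by simp
  thus ?thesis using conjugate_square_eq_0_vec[OF pv] by simp
qed

lemma eig_orth:
  fixes G :: "complex mat"
  assumes G: "G \<in> carrier_mat N N" and skew: "mat_adjoint G = - G"
    and x: "x \<in> eigsp G a" and y: "y \<in> eigsp G b" and ab: "a \<noteq> b" and b: "cnj b = - b"
  shows "x \<bullet>c y = 0"
proof -
  have xc: "x \<in> carrier_vec N" and gx: "G *\<^sub>v x = a \<cdot>\<^sub>v x" using x G unfolding eigsp_def by auto
  have yc: "y \<in> carrier_vec N" and gy: "G *\<^sub>v y = b \<cdot>\<^sub>v y" using y G unfolding eigsp_def by auto
  have "(G *\<^sub>v x) \<bullet>c y = x \<bullet>c (mat_adjoint G *\<^sub>v y)" using adj_sprod[OF G xc yc] .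
  also have "mat_adjoint G *\<^sub>v y = - (b \<cdot>\<^sub>v y)" using skew G yc gy by simp
  also have "x \<bullet>c (- (b \<cdot>\<^sub>v y)) = b * (x \<bullet>c y)"
    using xc yc b by (simp add: conjugate_smult_vec uminus_conjugate_vec[symmetric])
  finally have "a * (x \<bullet>c y) = b * (x \<bullet>c y)" using gx xc yc by simp
  thus ?thesis using ab by simp
qed

lemma zero_eigsp: "G \<in> carrier_mat N N \<Longrightarrow> 0\<^sub>v N \<in> eigsp (G :: complex mat) c"
  unfolding eigsp_def by auto



lemma beta1_sq: assumes m: "m \<ge> 2" shows "(beta1 m)^2 \<le> 1"
proof -
  define x where "x = real m"
  have x: "x \<ge> 2" using m unfolding x_def by simp
  define s where "s = sqrt ((x - 1) / (x + 1))"
  have s1: "s \<le> 1" unfolding s_def using x by simp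
  have key: "(x / (x + 2))^2 \<le> (x - 1) / (x + 1)"
  proof -
    have "x^2 * (x + 1) \<le> (x - 1) * (x + 2)^2"
    proof -
      have "(x - 1) * (x + 2)^2 - x^2 * (x + 1) = 2 * (x * x) - 4"
        by (simp add: power2_eq_square algebra_simps)
      moreover have "x * x \<ge> 2 * 2" using x by (intro mult_mono) auto
      ultimately show ?thesis by linarith
    qed
    thus ?thesis using x by (simp add: power_divide field_simps)
  qed
  have s2: "x / (x + 2) \<le> s" unfolding s_def using key x by (intro real_le_rsqrt) auto
  have "x \<le> (x + 2) * s" using s2 x by (simp add: field_simps)
  moreover have "(x + 2) * s \<le> x + 2" using s1 x by simp
  ultimately have "\<bar>beta1 m\<bar> \<le> 1" unfolding beta1_def x_def[symmetric] s_def[symmetric] by linarith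
  thus ?thesis by (simp add: abs_square_le_1)
qed

lemma beta2_sq: assumes m: "m \<ge> 2" shows "4 * (beta2 m)^2 \<le> 1"
proof -
  define x where "x = real m"
  have x: "x \<ge> 2" using m unfolding x_def by simp
  define r where "r = sqrt ((x + 1) / (x - 1))"
  have k1: "((x + 1) / x)^2 \<le> (x + 1) / (x - 1)"
  proof -
    have "(x + 1)^2 * (x - 1) \<le> (x + 1) * x^2"
    proof -
      have "(x + 1) * x^2 - (x + 1)^2 * (x - 1) = x + 1"
        by (simp add: power2_eq_square algebra_simps)
      thus ?thesis using x by linarith
    qed
    thus ?thesis using x by (simp add: power_divide field_simps)
  qed
  have r1: "(x + 1) / x \<le> r" unfolding r_def using k1 x by (intro real_le_rsqrt) auto
  have k2: "(x + 1) / (x - 1) \<le> ((2 * x + 3) / (2 * x))^2"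
  proof -
    have "4 * x^2 * (x + 1) \<le> (2 * x + 3)^2 * (x - 1)"
    proof -
      have "(2 * x + 3)^2 * (x - 1) - 4 * x^2 * (x + 1) = (x - 2) * (4 * x + 5) + 1"
        by (simp add: power2_eq_square algebra_simps)
      moreover have "(x - 2) * (4 * x + 5) \<ge> 0" using x by simp
      ultimately show ?thesis by linarith
    qed
    thus ?thesis using x by (simp add: power_divide field_simps)
  qed
  have r2: "r \<le> (2 * x + 3) / (2 * x)" unfolding r_def
    using real_sqrt_le_mono[OF k2] x by simp
  have "x + 1 \<le> x * r" using r1 x by (simp add: field_simps)
  moreover have "2 * (x * r) \<le> 2 * x + 3" using r2 x by (simp add: field_simps)
  moreover have "2 * beta2 m = 2 * x + 2 - 2 * (x * r)"
    unfolding beta2_def x_def[symmetric] r_def[symmetric] by (simp add: algebra_simps)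
  ultimately have "\<bar>2 * beta2 m\<bar> \<le> 1" unfolding abs_le_iff by linarith
  hence "(2 * beta2 m)^2 \<le> 1" by (simp only: abs_square_le_1)
  thus ?thesis by (simp add: power_mult_distrib)
qed



lemma zero_mat_mult_vec[simp]: "v \<in> carrier_vec N \<Longrightarrow> (0\<^sub>m M N :: complex mat) *\<^sub>v v = 0\<^sub>v M"
  by (intro eq_vecI) auto

fun msum :: "nat \<Rightarrow> (nat \<Rightarrow> complex mat) \<Rightarrow> nat \<Rightarrow> complex mat" where
  "msum N f 0 = 0\<^sub>m N N"
| "msum N f (Suc k) = msum N f k + f k"

lemma msum_carrier: "(\<And>i. f i \<in> carrier_mat N N) \<Longrightarrow> msum N f k \<in> carrier_mat N N"
  by (induct k) auto

lemma msum_cong: "(\<And>i. i < k \<Longrightarrow> f i = g i) \<Longrightarrow> msum N f k = msum N g k"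
  by (induct k) auto

lemma msum_mult_left:
  assumes A: "A \<in> carrier_mat N N" and f: "\<And>i. f i \<in> carrier_mat N N"
  shows "A * msum N f k = msum N (\<lambda>i. A * f i) k"
proof (induct k)
  case 0 then show ?case using A by (simp add: right_mult_zero_mat)
next
  case (Suc k)
  have "A * msum N f (Suc k) = A * msum N f k + A * f k"
    using mult_add_distrib_mat[OF A msum_carrier[OF f] f] by simp
  thus ?case using Suc by simp
qed

lemma msum_mult_right:
  assumes A: "A \<in> carrier_mat N N" and f: "\<And>i. f i \<in> carrier_mat N N"
  shows "msum N f k * A = msum N (\<lambda>i. f i * A) k"
proof (induct k)
  case 0 then show ?case using A by (simp add: left_mult_zero_mat)
next
  case (Suc k)
  have "msum N f (Suc k) * A = msum N f k * A + f k * A"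
    using add_mult_distrib_mat[OF msum_carrier[OF f] f A] by simp
  thus ?case using Suc by simp
qed

lemma msum_sprod:
  assumes f: "\<And>i. f i \<in> carrier_mat N N" and v: "v \<in> carrier_vec N" and w: "w \<in> carrier_vec N"
  shows "(msum N f k *\<^sub>v v) \<bullet>c w = (\<Sum>i<k. (f i *\<^sub>v v) \<bullet>c w)"
proof (induct k)
  case 0 then show ?case using v w by simp
next
  case (Suc k)
  have "msum N f (Suc k) *\<^sub>v v = msum N f k *\<^sub>v v + f k *\<^sub>v v"
    using f msum_carrier[OF f] v by (simp add: add_mult_distrib_mat_vec[of _ N N])
  hence "(msum N f (Suc k) *\<^sub>v v) \<bullet>c w = (msum N f k *\<^sub>v v) \<bullet>c w + (f k *\<^sub>v v) \<bullet>c w"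
  proof -
    have c1: "msum N f k *\<^sub>v v \<in> carrier_vec N" using msum_carrier[of f N k, OF f] v by simp
    have c2: "f k *\<^sub>v v \<in> carrier_vec N" using f[of k] v by simp
    show ?thesis using add_scalar_prod_distrib[OF c1 c2, of "conjugate w"] w \<open>msum N f (Suc k) *\<^sub>v v = _\<close> by simp
  qed
  thus ?case using Suc by simp
qed

lemma msum_single:
  assumes f: "\<And>i. f i \<in> carrier_mat N N" and u: "u \<in> carrier_vec N"
    and h: "\<And>i. f i *\<^sub>v u = (if i = i0 then u else 0\<^sub>v N)"
  shows "msum N f k *\<^sub>v u = (if i0 < k then u else 0\<^sub>v N)"
proof (induct k)
  case 0 then show ?case using u by simp
next
  case (Suc k)
  have "msum N f (Suc k) *\<^sub>v u = msum N f k *\<^sub>v u + f k *\<^sub>v u"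
    using f msum_carrier[OF f] u by (simp add: add_mult_distrib_mat_vec[of _ N N])
  thus ?case using Suc h[of k] u by auto
qed



locale stp =
  fixes m n N :: nat and G :: "complex mat" and P :: "int \<Rightarrow> complex mat" and Q :: "complex mat"
  assumes hm: "m = 2 * n" and hn: "n \<ge> 1"
    and hG: "G \<in> carrier_mat N N"
    and hGskew: "mat_adjoint G = - G"
    and hGspec: "\<forall>c. eigenvalue G c \<longrightarrow> (\<exists>j::int. 0 \<le> j \<and> j \<le> int m \<and> c = \<i> * of_int (int m - 2 * j))"
    and hP: "\<forall>j::int. 0 \<le> j \<and> j \<le> int m \<longrightarrow> is_orth_proj N (P j) (eigsp G (\<i> * of_int (int m - 2 * j)))"
    and hP0: "\<forall>j::int. \<not> (0 \<le> j \<and> j \<le> int m) \<longrightarrow> P j = 0\<^sub>m N N"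
    and hQ: "is_orth_proj N Q (orth_compl N
              {x + y | x y. x \<in> eigsp G (\<i> * of_int (int m - 2 * (int n - 1)))
                          \<and> y \<in> eigsp G (\<i> * of_int (int m - 2 * int n))})"
begin

definition lam :: "int \<Rightarrow> complex" where "lam j = \<i> * of_int (int m - 2 * j)"

lemma lam_cnj: "cnj (lam j) = - lam j" by (simp add: lam_def)

lemma lam_inj: "lam j = lam k \<Longrightarrow> j = k" by (simp add: lam_def)

lemma P_carrier: "P j \<in> carrier_mat N N"
  using hP hP0 op_carrier by (cases "0 \<le> j \<and> j \<le> int m") auto

lemma Q_carrier: "Q \<in> carrier_mat N N" using op_carrier[OF hQ] .

lemma S_carrier: "u \<in> eigsp G c \<Longrightarrow> u \<in> carrier_vec N"
  using hG unfolding eigsp_def by auto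

lemma P_on:
  assumes j0: "0 \<le> j0" "j0 \<le> int m" and u: "u \<in> eigsp G (lam j0)"
  shows "P j *\<^sub>v u = (if j = j0 then u else 0\<^sub>v N)"
proof (cases "0 \<le> j \<and> j \<le> int m")
  case True
  have h: "is_orth_proj N (P j) (eigsp G (lam j))" using hP True unfolding lam_def by auto
  show ?thesis
  proof (cases "j = j0")
    case True
    then show ?thesis using op_fix[OF h] u by simp
  next
    case False
    have "P j *\<^sub>v u = 0\<^sub>v N"
    proof (rule op_kill[OF h S_carrier[OF u]])
      fix w assume w: "w \<in> eigsp G (lam j)"
      show "w \<bullet>c u = 0"
        by (rule eig_orth[OF hG hGskew w u]) (use False lam_inj lam_cnj in auto)
    qed
    thus ?thesis using False by simp
  qed
next
  case False
  then have "P j = 0\<^sub>m N N" using hP0 by auto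
  moreover have "j \<noteq> j0" using False j0 by auto
  ultimately show ?thesis using S_carrier[OF u] by simp
qed

lemma Q_on:
  assumes j0: "0 \<le> j0" "j0 \<le> int m" and u: "u \<in> eigsp G (lam j0)"
  shows "Q *\<^sub>v u = (if j0 = int n - 1 \<or> j0 = int n then 0\<^sub>v N else u)"
proof -
  let ?V = "{x + y | x y. x \<in> eigsp G (\<i> * of_int (int m - 2 * (int n - 1)))
                          \<and> y \<in> eigsp G (\<i> * of_int (int m - 2 * int n))}"
  have uc: "u \<in> carrier_vec N" using S_carrier[OF u] .
  show ?thesis
  proof (cases "j0 = int n - 1 \<or> j0 = int n")
    case True
    have uV: "u \<in> ?V"
    proof (cases "j0 = int n - 1")
      case True
      have "u = u + 0\<^sub>v N" using uc by simp
      moreover have "u \<in> eigsp G (\<i> * of_int (int m - 2 * (int n - 1)))" using u True unfolding lam_def by simp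
      moreover have "0\<^sub>v N \<in> eigsp G (\<i> * of_int (int m - 2 * int n))" using zero_eigsp[OF hG] .
      ultimately show ?thesis by blast
    next
      case False
      hence jn: "j0 = int n" using \<open>j0 = int n - 1 \<or> j0 = int n\<close> by simp
      have "u = 0\<^sub>v N + u" using uc by simp
      moreover have "u \<in> eigsp G (\<i> * of_int (int m - 2 * int n))" using u jn unfolding lam_def by simp
      moreover have "0\<^sub>v N \<in> eigsp G (\<i> * of_int (int m - 2 * (int n - 1)))" using zero_eigsp[OF hG] .
      ultimately show ?thesis by blast
    qed
    have "Q *\<^sub>v u = 0\<^sub>v N"
    proof (rule op_kill[OF hQ uc])
      fix w assume "w \<in> orth_compl N ?V"
      thus "w \<bullet>c u = 0" using uV unfolding orth_compl_def by auto
    qed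
    thus ?thesis using True by simp
  next
    case False
    have "u \<in> orth_compl N ?V"
      unfolding orth_compl_def
    proof (intro CollectI conjI ballI uc)
      fix z assume "z \<in> ?V"
      then obtain x y where z: "z = x + y" and x: "x \<in> eigsp G (lam (int n - 1))"
        and y: "y \<in> eigsp G (lam (int n))" unfolding lam_def by auto
      have xc: "x \<in> carrier_vec N" using S_carrier[OF x] .
      have yc: "y \<in> carrier_vec N" using S_carrier[OF y] .
      have ux: "u \<bullet>c x = 0"
        by (rule eig_orth[OF hG hGskew u x]) (use False lam_inj lam_cnj in auto)
      have uy: "u \<bullet>c y = 0"
        by (rule eig_orth[OF hG hGskew u y]) (use False lam_inj lam_cnj in auto)
      have "u \<bullet>c z = u \<bullet> (conjugate x + conjugate y)"
        using z xc yc by (simp add: conjugate_add_vec[OF xc yc])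
      also have "\<dots> = u \<bullet>c x + u \<bullet>c y"
        using uc xc yc by (simp add: scalar_prod_add_distrib[of _ N])
      finally show "u \<bullet>c z = 0" using ux uy by simp
    qed
    hence "Q *\<^sub>v u = u" using op_fix[OF hQ] by simp
    thus ?thesis using False by simp
  qed
qed

end


lemma lin7:
  fixes M0 M1 M2 M3 M4 M5 M6 :: "complex mat"
  assumes c: "M0 \<in> carrier_mat N N" "M1 \<in> carrier_mat N N" "M2 \<in> carrier_mat N N"
    "M3 \<in> carrier_mat N N" "M4 \<in> carrier_mat N N" "M5 \<in> carrier_mat N N" "M6 \<in> carrier_mat N N"
    and u: "u \<in> carrier_vec N"
  shows "(a0 \<cdot>\<^sub>m M0 + a1 \<cdot>\<^sub>m M1 + a2 \<cdot>\<^sub>m M2 + a3 \<cdot>\<^sub>m M3 - a4 \<cdot>\<^sub>m M4 - a5 \<cdot>\<^sub>m M5 - a6 \<cdot>\<^sub>m M6) *\<^sub>v u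
    = a0 \<cdot>\<^sub>v (M0 *\<^sub>v u) + a1 \<cdot>\<^sub>v (M1 *\<^sub>v u) + a2 \<cdot>\<^sub>v (M2 *\<^sub>v u) + a3 \<cdot>\<^sub>v (M3 *\<^sub>v u)
      - a4 \<cdot>\<^sub>v (M4 *\<^sub>v u) - a5 \<cdot>\<^sub>v (M5 *\<^sub>v u) - a6 \<cdot>\<^sub>v (M6 *\<^sub>v u)"
  using c u by (simp add: add_mult_distrib_mat_vec[of _ N N] minus_mult_distrib_mat_vec[of _ N N]
     smult_mat_mult_vec'[of _ N] minus_carrier_mat)

context stp begin

definition T :: "complex mat" where
  "T = (- \<i>) \<cdot>\<^sub>m G
           + of_nat ((m + 2) * (m - 1)) \<cdot>\<^sub>m P (int n - 1)
           + of_nat (m * (m + 1)) \<cdot>\<^sub>m P (int n)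
           + of_nat ((m + 1)^2) \<cdot>\<^sub>m Q
           - complex_of_real ((real m + 4) * (beta1 m)^2) \<cdot>\<^sub>m P (int n - 2)
           - complex_of_real ((real m + 2) * (beta2 m)^2) \<cdot>\<^sub>m P (int n + 1)
           - of_nat (m * (m + 1)) \<cdot>\<^sub>m 1\<^sub>m N"

definition tc :: "int \<Rightarrow> complex" where
  "tc j0 = of_int (int m - 2 * j0)
     + (if j0 = int n - 1 then of_nat ((m + 2) * (m - 1)) else 0)
     + (if j0 = int n then of_nat (m * (m + 1)) else 0)
     + (if j0 = int n - 1 \<or> j0 = int n then 0 else of_nat ((m + 1)^2))
     - (if j0 = int n - 2 then complex_of_real ((real m + 4) * (beta1 m)^2) else 0)
     - (if j0 = int n + 1 then complex_of_real ((real m + 2) * (beta2 m)^2) else 0)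
     - of_nat (m * (m + 1))"

lemma T_carrier: "T \<in> carrier_mat N N"
  unfolding T_def using hG P_carrier Q_carrier
  by (intro add_carrier_mat minus_carrier_mat smult_carrier_mat one_carrier_mat hG P_carrier Q_carrier)

lemma T_on:
  assumes j0: "0 \<le> j0" "j0 \<le> int m" and u: "u \<in> eigsp G (lam j0)"
  shows "T *\<^sub>v u = tc j0 \<cdot>\<^sub>v u"
proof -
  have uc: "u \<in> carrier_vec N" using S_carrier[OF u] .
  have Gu: "G *\<^sub>v u = lam j0 \<cdot>\<^sub>v u" using u unfolding eigsp_def by simp
  note PC = P_carrier hG Q_carrier
  have e: "T *\<^sub>v u = ((- \<i>) \<cdot>\<^sub>m G) *\<^sub>v u
           + of_nat ((m + 2) * (m - 1)) \<cdot>\<^sub>v (P (int n - 1) *\<^sub>v u)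
           + of_nat (m * (m + 1)) \<cdot>\<^sub>v (P (int n) *\<^sub>v u)
           + of_nat ((m + 1)^2) \<cdot>\<^sub>v (Q *\<^sub>v u)
           - complex_of_real ((real m + 4) * (beta1 m)^2) \<cdot>\<^sub>v (P (int n - 2) *\<^sub>v u)
           - complex_of_real ((real m + 2) * (beta2 m)^2) \<cdot>\<^sub>v (P (int n + 1) *\<^sub>v u)
           - of_nat (m * (m + 1)) \<cdot>\<^sub>v u"
    unfolding T_def using lin7[OF hG P_carrier P_carrier Q_carrier P_carrier P_carrier one_carrier_mat uc]
    by (simp only: smult_mat_mult_vec'[OF hG uc] one_mult_mat_vec[OF uc])
  have g: "((- \<i>) \<cdot>\<^sub>m G) *\<^sub>v u = ((- \<i>) * lam j0) \<cdot>\<^sub>v u"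
    using smult_mat_mult_vec'[OF hG uc] Gu by (simp add: smult_smult_assoc)
  show ?thesis
    unfolding e g P_on[OF j0 u] Q_on[OF j0 u]
    by (intro eq_vecI) (use uc in \<open>auto simp: tc_def lam_def algebra_simps\<close>)
qed

lemma tc_nonneg:
  assumes j0: "0 \<le> j0" "j0 \<le> int m"
  shows "tc j0 \<ge> 0"
proof -
  have m2: "m \<ge> 2" using hm hn by simp
  have rm: "real m = 2 * real n" using hm by simp
  have rm1: "real (m - Suc 0) = real m - 1" using m2 by (simp add: of_nat_diff)
  define a1 where "a1 = (m + 2) * (m - 1)"
  have ra1: "real a1 = (real m + 2) * (real m - 1)" unfolding a1_def using m2 by (simp add: of_nat_diff algebra_simps)
  have Im: "Im (tc j0) = 0" by (simp add: tc_def)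
  have Re: "Re (tc j0) = real_of_int (int m - 2 * j0)
     + (if j0 = int n - 1 then (real m + 2) * (real m - 1) else 0)
     + (if j0 = int n then real m * (real m + 1) else 0)
     + (if j0 = int n - 1 \<or> j0 = int n then 0 else (real m + 1)^2)
     - (if j0 = int n - 2 then (real m + 4) * (beta1 m)^2 else 0)
     - (if j0 = int n + 1 then (real m + 2) * (beta2 m)^2 else 0)
     - real m * (real m + 1)"
    unfolding tc_def a1_def[symmetric] by (simp add: ra1 algebra_simps power2_eq_square)
  have b1: "(real m + 4) * (beta1 m)^2 \<le> real m + 4"
    using beta1_sq[OF m2] mult_left_mono[of "(beta1 m)^2" 1 "real m + 4"] by simp
  have b2: "(real m + 2) * (4 * (beta2 m)^2) \<le> real m + 2"
    using beta2_sq[OF m2] mult_left_mono[of "4 * (beta2 m)^2" 1 "real m + 2"] by simp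
  have sq: "(real m + 1)^2 = real m * (real m + 1) + real m + 1"
    by (simp add: power2_eq_square algebra_simps)
  have p1: "(real m + 2) * (real m - 1) = real m * (real m + 1) - 2"
    by (simp add: algebra_simps)
  have "Re (tc j0) \<ge> 0"
  proof -
    consider "j0 = int n - 1" | "j0 = int n" | "j0 = int n - 2" | "j0 = int n + 1"
      | "j0 \<noteq> int n - 1" "j0 \<noteq> int n" "j0 \<noteq> int n - 2" "j0 \<noteq> int n + 1" by blast
    then show ?thesis
    proof cases
      case 1 then show ?thesis unfolding Re using rm p1 by simp
    next
      case 2 then show ?thesis unfolding Re using rm by simp
    next
      case 3
      have "Re (tc j0) = real m + 5 - (real m + 4) * (beta1 m)^2" unfolding Re using 3 sq rm by simp
      then show ?thesis using b1 by linarith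
    next
      case 4
      have "Re (tc j0) = real m - 1 - (real m + 2) * (beta2 m)^2" unfolding Re using 4 sq rm by simp
      moreover have "real m \<ge> 2" using m2 by simp
      ultimately show ?thesis using b2 by (simp add: algebra_simps)
    next
      case 5 then show ?thesis unfolding Re using rm sq j0 by simp
    qed
  qed
  thus ?thesis using Im by (simp add: less_eq_complex_def)
qed

end


lemma sprod_smult_right_c:
  fixes x y :: "complex vec"
  assumes "x \<in> carrier_vec N" "y \<in> carrier_vec N"
  shows "x \<bullet>c (c \<cdot>\<^sub>v y) = cnj c * (x \<bullet>c y)"
  using assms by (simp add: conjugate_smult_vec)

lemma sprod_uminus_right_c:
  fixes x y :: "complex vec"
  assumes "x \<in> carrier_vec N" "y \<in> carrier_vec N"
  shows "x \<bullet>c (- y) = - (x \<bullet>c y)"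
  using assms by (simp add: uminus_conjugate_vec[symmetric])

lemma mult_zero_vec_c[simp]: "(A :: complex mat) \<in> carrier_mat M N \<Longrightarrow> A *\<^sub>v 0\<^sub>v N = 0\<^sub>v M"
  by (intro eq_vecI) auto

context stp begin

definition Pn :: "nat \<Rightarrow> complex mat" where "Pn i = P (int i)"
definition L :: "complex mat" where "L = msum N Pn (Suc m)"

lemma Pn_carrier: "Pn i \<in> carrier_mat N N" unfolding Pn_def using P_carrier .

lemma L_carrier: "L \<in> carrier_mat N N" unfolding L_def using msum_carrier Pn_carrier by blast

lemma Pn_proj: "i \<le> m \<Longrightarrow> is_orth_proj N (Pn i) (eigsp G (lam (int i)))"
  unfolding Pn_def lam_def by (rule hP[rule_format]) auto

lemma Pn_big: "\<not> i \<le> m \<Longrightarrow> Pn i = 0\<^sub>m N N"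
  unfolding Pn_def using hP0 by auto

lemma L_fix:
  assumes j0: "0 \<le> j0" "j0 \<le> int m" and u: "u \<in> eigsp G (lam j0)"
  shows "L *\<^sub>v u = u"
proof -
  have "L *\<^sub>v u = (if nat j0 < Suc m then u else 0\<^sub>v N)"
    unfolding L_def
  proof (rule msum_single[OF Pn_carrier S_carrier[OF u]])
    fix i show "Pn i *\<^sub>v u = (if i = nat j0 then u else 0\<^sub>v N)"
      unfolding Pn_def P_on[OF j0 u] using j0 by auto
  qed
  thus ?thesis using j0 by auto
qed

lemma L_Pn: "L * Pn i = Pn i"
proof (rule mat_eq_on_vec[of _ N])
  show "L * Pn i \<in> carrier_mat N N" using L_carrier Pn_carrier by simp
  show "Pn i \<in> carrier_mat N N" using Pn_carrier .
  fix v :: "complex vec" assume v: "v \<in> carrier_vec N"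
  have "(L * Pn i) *\<^sub>v v = L *\<^sub>v (Pn i *\<^sub>v v)" using assoc_mult_mat_vec[OF L_carrier Pn_carrier v] .
  also have "\<dots> = Pn i *\<^sub>v v"
  proof (cases "i \<le> m")
    case True
    show ?thesis by (rule L_fix[of "int i"]) (use True op_range[OF Pn_proj[OF True] v] in auto)
  next
    case False
    then show ?thesis using Pn_big[OF False] v L_carrier by simp
  qed
  finally show "(L * Pn i) *\<^sub>v v = Pn i *\<^sub>v v" .
qed

lemma LL: "L * L = L"
proof -
  have "L * L = msum N (\<lambda>i. L * Pn i) (Suc m)"
    using msum_mult_left[of L N Pn "Suc m", OF L_carrier Pn_carrier] by (simp only: L_def[symmetric])
  also have "\<dots> = msum N Pn (Suc m)" by (simp only: L_Pn)
  also have "\<dots> = L" by (simp only: L_def)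
  finally show ?thesis .
qed

lemma GPn: "G * Pn i = Pn i * G"
proof (cases "i \<le> m")
  case False
  then show ?thesis using Pn_big[OF False] hG by (simp add: left_mult_zero_mat right_mult_zero_mat)
next
  case True
  have h: "is_orth_proj N (Pn i) (eigsp G (lam (int i)))" using Pn_proj[OF True] .
  have adj: "mat_adjoint (Pn i) = Pn i" using h unfolding is_orth_proj_def by auto
  note PC = Pn_carrier[of i]
  show ?thesis
  proof (rule mat_eq_on_vec[of _ N])
    show "G * Pn i \<in> carrier_mat N N" using hG PC by simp
    show "Pn i * G \<in> carrier_mat N N" using hG PC by simp
    fix v :: "complex vec" assume v: "v \<in> carrier_vec N"
    have pv: "Pn i *\<^sub>v v \<in> carrier_vec N" using PC v by simp
    have gv: "G *\<^sub>v v \<in> carrier_vec N" using hG v by simp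
    have l: "(G * Pn i) *\<^sub>v v = lam (int i) \<cdot>\<^sub>v (Pn i *\<^sub>v v)"
      using op_range[OF h v] hG PC v unfolding eigsp_def by simp
    have "Pn i *\<^sub>v (G *\<^sub>v v) = lam (int i) \<cdot>\<^sub>v (Pn i *\<^sub>v v)"
    proof (rule vec_eq_by_sprod[of _ N])
      show "Pn i *\<^sub>v (G *\<^sub>v v) \<in> carrier_vec N" using PC gv by simp
      show "lam (int i) \<cdot>\<^sub>v (Pn i *\<^sub>v v) \<in> carrier_vec N" using pv by simp
      fix w :: "complex vec" assume w: "w \<in> carrier_vec N"
      have pw: "Pn i *\<^sub>v w \<in> carrier_vec N" using PC w by simp
      have gpw: "G *\<^sub>v (Pn i *\<^sub>v w) = lam (int i) \<cdot>\<^sub>v (Pn i *\<^sub>v w)"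
        using op_range[OF h w] unfolding eigsp_def by simp
      have "(Pn i *\<^sub>v (G *\<^sub>v v)) \<bullet>c w = (G *\<^sub>v v) \<bullet>c (Pn i *\<^sub>v w)"
        using herm_sprod[OF PC adj gv w] .
      also have "\<dots> = v \<bullet>c (mat_adjoint G *\<^sub>v (Pn i *\<^sub>v w))" using adj_sprod[OF hG v pw] .
      also have "mat_adjoint G *\<^sub>v (Pn i *\<^sub>v w) = - (lam (int i) \<cdot>\<^sub>v (Pn i *\<^sub>v w))"
      proof -
        have "(- G) *\<^sub>v (Pn i *\<^sub>v w) = - (G *\<^sub>v (Pn i *\<^sub>v w))"
          by (rule uminus_mult_mat_vec) (use hG pw PC in auto)
        thus ?thesis using hGskew gpw by simp
      qed
      also have "v \<bullet>c \<dots> = lam (int i) * (v \<bullet>c (Pn i *\<^sub>v w))"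
        using v pw by (simp add: sprod_uminus_right_c[of _ N] sprod_smult_right_c[of _ N] lam_cnj)
      also have "v \<bullet>c (Pn i *\<^sub>v w) = (Pn i *\<^sub>v v) \<bullet>c w" using herm_sprod[OF PC adj v w] by simp
      also have "lam (int i) * \<dots> = (lam (int i) \<cdot>\<^sub>v (Pn i *\<^sub>v v)) \<bullet>c w" using pv w by simp
      finally show "(Pn i *\<^sub>v (G *\<^sub>v v)) \<bullet>c w = (lam (int i) \<cdot>\<^sub>v (Pn i *\<^sub>v v)) \<bullet>c w" .
    qed
    thus "(G * Pn i) *\<^sub>v v = (Pn i * G) *\<^sub>v v" using l hG PC v by simp
  qed
qed

lemma LG: "L * G = G * L"
proof -
  have "L * G = msum N (\<lambda>i. Pn i * G) (Suc m)"
    unfolding L_def by (rule msum_mult_right[OF hG Pn_carrier])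
  also have "\<dots> = msum N (\<lambda>i. G * Pn i) (Suc m)" using GPn by simp
  also have "\<dots> = G * L" unfolding L_def by (rule msum_mult_left[OF hG Pn_carrier, symmetric])
  finally show ?thesis .
qed

end


context stp begin

lemma L_id: "L = 1\<^sub>m N"
proof -
  obtain es where cp: "char_poly G = (\<Prod>a\<leftarrow>es. [:- a, 1:])" using char_poly_factorized[OF hG] by blast
  obtain B Sp Sq where sd: "schur_decomposition G es = (B, Sp, Sq)"
    by (cases "schur_decomposition G es") auto
  have sim: "similar_mat_wit G B Sp Sq" and ut: "upper_triangular B"
    using schur_decomposition[OF hG cp sd] by auto
  note sw = similar_mat_witD2[OF hG sim]
  have B: "B \<in> carrier_mat N N" and Sp: "Sp \<in> carrier_mat N N" and Sq: "Sq \<in> carrier_mat N N"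
    and SpSq: "Sp * Sq = 1\<^sub>m N" and SqSp: "Sq * Sp = 1\<^sub>m N" and Geq: "G = Sp * B * Sq"
    using sw by auto
  have GSp: "G * Sp = Sp * B"
  proof -
    have "G * Sp = Sp * B * Sq * Sp" using Geq by simp
    also have "\<dots> = Sp * B * (Sq * Sp)" using B Sp Sq by (simp add: assoc_mult_mat[of _ N N _ N _ N])
    also have "\<dots> = Sp * B" using SqSp B Sp by simp
    finally show ?thesis .
  qed
  define Z where "Z = Sp - L * Sp"
  have LSp: "L * Sp \<in> carrier_mat N N" using L_carrier Sp by simp
  have Zc: "Z \<in> carrier_mat N N" unfolding Z_def using Sp LSp by (simp add: minus_carrier_mat)
  have LZ: "L * Z = 0\<^sub>m N N"
  proof -
    have "L * Z = L * Sp - L * (L * Sp)" unfolding Z_def using mult_minus_distrib_mat[OF L_carrier Sp LSp] .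
    also have "L * (L * Sp) = (L * L) * Sp" using L_carrier Sp by (simp add: assoc_mult_mat[of _ N N _ N _ N])
    also have "\<dots> = L * Sp" using LL by simp
    finally show ?thesis using LSp by simp
  qed
  have GZ: "G * Z = Z * B"
  proof -
    have "G * Z = G * Sp - G * (L * Sp)" unfolding Z_def using mult_minus_distrib_mat[OF hG Sp LSp] .
    also have "G * (L * Sp) = (G * L) * Sp" using L_carrier Sp hG by (simp add: assoc_mult_mat[of _ N N _ N _ N])
    also have "\<dots> = (L * G) * Sp" using LG by simp
    also have "\<dots> = L * (G * Sp)" using L_carrier Sp hG by (simp add: assoc_mult_mat[of _ N N _ N _ N])
    also have "\<dots> = (L * Sp) * B" using L_carrier Sp B GSp by (simp add: assoc_mult_mat[of _ N N _ N _ N])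
    finally have "G * Z = Sp * B - (L * Sp) * B" using GSp by simp
    also have "\<dots> = Z * B" unfolding Z_def using minus_mult_distrib_mat[OF Sp LSp B] by simp
    finally show ?thesis .
  qed
  have cols: "col Z k = 0\<^sub>v N" if "k < N" for k
    using that
  proof (induct k rule: less_induct)
    case (less k)
    let ?z = "col Z k"
    have zc: "?z \<in> carrier_vec N" using col_carrier_vec[OF less.prems Zc] .
    have IH: "Z $$ (r, i) = 0" if "i < k" "r < N" for r i
    proof -
      have iN: "i < N" using that less.prems by simp
      have "col Z i = 0\<^sub>v N" using less.hyps[OF that(1) iN] .
      hence "col Z i $ r = 0" using that by simp
      moreover have "col Z i $ r = Z $$ (r, i)" using index_col[of r Z i] that iN carrier_matD[OF Zc] by simp
      ultimately show ?thesis by simp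
    qed
    have ZB: "Z *\<^sub>v col B k = B $$ (k, k) \<cdot>\<^sub>v ?z"
    proof (rule eq_vecI)
      fix r assume "r < dim_vec (B $$ (k, k) \<cdot>\<^sub>v ?z)"
      hence r: "r < N" using Zc by simp
      have "(Z *\<^sub>v col B k) $ r = (\<Sum>i = 0..<N. Z $$ (r, i) * B $$ (i, k))"
        using r Zc B less.prems by (simp add: scalar_prod_def)
      also have "\<dots> = (\<Sum>i = 0..<N. (if i = k then Z $$ (r, k) * B $$ (k, k) else 0))"
      proof (rule sum.cong[OF refl])
        fix i assume i: "i \<in> {0..<N}"
        show "Z $$ (r, i) * B $$ (i, k) = (if i = k then Z $$ (r, k) * B $$ (k, k) else 0)"
        proof (cases "i < k")
          case True then show ?thesis using IH[OF True r] by simp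
        next
          case False
          show ?thesis
          proof (cases "i = k")
            case False
            with \<open>\<not> i < k\<close> have "k < i" by simp
            moreover have "i < dim_row B" using i B by simp
            ultimately have "B $$ (i, k) = 0" using upper_triangularD[OF ut] by blast
            then show ?thesis using False by simp
          qed simp
        qed
      qed
      also have "\<dots> = Z $$ (r, k) * B $$ (k, k)" using less.prems by simp
      finally show "(Z *\<^sub>v col B k) $ r = (B $$ (k, k) \<cdot>\<^sub>v ?z) $ r" using r Zc less.prems by simp
    qed (use Zc B in simp)
    have Gz: "G *\<^sub>v ?z = B $$ (k, k) \<cdot>\<^sub>v ?z"
    proof -
      have "G *\<^sub>v ?z = col (G * Z) k" using col_mult2[OF hG Zc less.prems] by simp
      also have "\<dots> = col (Z * B) k" using GZ by simp
      also have "\<dots> = Z *\<^sub>v col B k" using col_mult2[OF Zc B less.prems] .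
      finally show ?thesis using ZB by simp
    qed
    have Lz: "L *\<^sub>v ?z = 0\<^sub>v N"
    proof -
      have "L *\<^sub>v ?z = col (L * Z) k" using col_mult2[OF L_carrier Zc less.prems] by simp
      also have "\<dots> = 0\<^sub>v N" using LZ less.prems by simp
      finally show ?thesis .
    qed
    show ?case
    proof (rule ccontr)
      assume nz: "?z \<noteq> 0\<^sub>v N"
      have "eigenvalue G (B $$ (k, k))"
        unfolding eigenvalue_def eigenvector_def
        by (intro exI[of _ ?z]) (use zc nz Gz hG in \<open>simp add: carrier_matD\<close>)
      then obtain j where j: "0 \<le> j" "j \<le> int m" "B $$ (k, k) = \<i> * of_int (int m - 2 * j)"
        using hGspec by blast
      have "?z \<in> eigsp G (lam j)" unfolding eigsp_def lam_def using zc Gz j hG by auto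
      hence "L *\<^sub>v ?z = ?z" using L_fix j by blast
      with Lz nz show False by simp
    qed
  qed
  have LSp_eq: "L * Sp = Sp"
  proof (rule eq_matI)
    fix i j assume i: "i < dim_row Sp" and j: "j < dim_col Sp"
    have "col Z j $ i = 0" using cols[of j] i j Sp by simp
    hence "Z $$ (i, j) = 0" using i j Sp Zc by simp
    moreover have "Z $$ (i, j) = Sp $$ (i, j) - (L * Sp) $$ (i, j)"
      unfolding Z_def using i j Sp LSp L_carrier by (intro index_minus_mat(1)) (simp_all add: carrier_matD)
    ultimately show "(L * Sp) $$ (i, j) = Sp $$ (i, j)" by simp
  qed (use LSp Sp in auto)
  have "L = L * (Sp * Sq)" using SpSq L_carrier by simp
  also have "\<dots> = (L * Sp) * Sq" using L_carrier Sp Sq by (simp add: assoc_mult_mat[of _ N N _ N _ N])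
  also have "\<dots> = 1\<^sub>m N" using LSp_eq SpSq by simp
  finally show ?thesis .
qed

lemma T_Pn: "i \<le> m \<Longrightarrow> T * Pn i = tc (int i) \<cdot>\<^sub>m Pn i"
proof (rule mat_eq_on_vec[of _ N])
  assume i: "i \<le> m"
  show "T * Pn i \<in> carrier_mat N N" using T_carrier Pn_carrier by simp
  show "tc (int i) \<cdot>\<^sub>m Pn i \<in> carrier_mat N N" using Pn_carrier by simp
  fix v :: "complex vec" assume v: "v \<in> carrier_vec N"
  have "(T * Pn i) *\<^sub>v v = T *\<^sub>v (Pn i *\<^sub>v v)" using assoc_mult_mat_vec[OF T_carrier Pn_carrier v] .
  also have "\<dots> = tc (int i) \<cdot>\<^sub>v (Pn i *\<^sub>v v)"
    by (rule T_on) (use i op_range[OF Pn_proj[OF i] v] in auto)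
  also have "\<dots> = (tc (int i) \<cdot>\<^sub>m Pn i) *\<^sub>v v" using smult_mat_mult_vec'[OF Pn_carrier v] by simp
  finally show "(T * Pn i) *\<^sub>v v = (tc (int i) \<cdot>\<^sub>m Pn i) *\<^sub>v v" .
qed

lemma main_pos:
  assumes psi: "\<psi> \<in> carrier_vec N"
  shows "0 \<le> (T *\<^sub>v \<psi>) \<bullet>c \<psi>"
proof -
  have "T *\<^sub>v \<psi> = T *\<^sub>v (L *\<^sub>v \<psi>)" using L_id psi by simp
  also have "\<dots> = (T * L) *\<^sub>v \<psi>" using assoc_mult_mat_vec[OF T_carrier L_carrier psi] by simp
  also have "T * L = msum N (\<lambda>i. T * Pn i) (Suc m)"
    unfolding L_def by (rule msum_mult_left[OF T_carrier Pn_carrier])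
  also have "\<dots> = msum N (\<lambda>i. tc (int i) \<cdot>\<^sub>m Pn i) (Suc m)"
    by (rule msum_cong) (simp add: T_Pn)
  finally have e: "T *\<^sub>v \<psi> = msum N (\<lambda>i. tc (int i) \<cdot>\<^sub>m Pn i) (Suc m) *\<^sub>v \<psi>" .
  have "(T *\<^sub>v \<psi>) \<bullet>c \<psi> = (\<Sum>i<Suc m. ((tc (int i) \<cdot>\<^sub>m Pn i) *\<^sub>v \<psi>) \<bullet>c \<psi>)"
    unfolding e by (rule msum_sprod) (use Pn_carrier psi in auto)
  also have "\<dots> = (\<Sum>i<Suc m. tc (int i) * ((Pn i *\<^sub>v \<psi>) \<bullet>c (Pn i *\<^sub>v \<psi>)))"
  proof (rule sum.cong[OF refl])
    fix i assume "i \<in> {..<Suc m}"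
    hence i: "i \<le> m" by simp
    have pv: "Pn i *\<^sub>v \<psi> \<in> carrier_vec N" using Pn_carrier[of i] psi by simp
    have "((tc (int i) \<cdot>\<^sub>m Pn i) *\<^sub>v \<psi>) \<bullet>c \<psi> = tc (int i) * ((Pn i *\<^sub>v \<psi>) \<bullet>c \<psi>)"
      using smult_mat_mult_vec'[OF Pn_carrier psi] pv psi by simp
    also have "(Pn i *\<^sub>v \<psi>) \<bullet>c \<psi> = (Pn i *\<^sub>v \<psi>) \<bullet>c (Pn i *\<^sub>v \<psi>)" using op_sq[OF Pn_proj[OF i] psi] .
    finally show "((tc (int i) \<cdot>\<^sub>m Pn i) *\<^sub>v \<psi>) \<bullet>c \<psi> = tc (int i) * ((Pn i *\<^sub>v \<psi>) \<bullet>c (Pn i *\<^sub>v \<psi>))" .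
  qed
  also have "\<dots> \<ge> 0"
  proof (rule sum_nonneg)
    fix i assume "i \<in> {..<Suc m}"
    hence i: "i \<le> m" by simp
    have "0 \<le> tc (int i)" by (rule tc_nonneg) (use i in auto)
    moreover have "0 \<le> (Pn i *\<^sub>v \<psi>) \<bullet>c (Pn i *\<^sub>v \<psi>)" by (rule conjugate_square_ge_0_vec)
    ultimately show "0 \<le> tc (int i) * ((Pn i *\<^sub>v \<psi>) \<bullet>c (Pn i *\<^sub>v \<psi>))" by (rule mult_nonneg_nonneg)
  qed
  finally show ?thesis .
qed

end

theorem mainTheorem7:
  fixes m n N :: nat and G :: "complex mat" and P :: "int \<Rightarrow> complex mat" and Q :: "complex mat"
  assumes hm: "m = 2 * n" and hn: "n \<ge> 1"
    and hG: "G \<in> carrier_mat N N"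
    and hGskew: "mat_adjoint G = - G"
    and hGspec: "\<forall>c. eigenvalue G c \<longrightarrow> (\<exists>j::int. 0 \<le> j \<and> j \<le> int m \<and> c = \<i> * of_int (int m - 2 * j))"
    and hP: "\<forall>j::int. 0 \<le> j \<and> j \<le> int m \<longrightarrow> is_orth_proj N (P j) (eigsp G (\<i> * of_int (int m - 2 * j)))"
    and hP0: "\<forall>j::int. \<not> (0 \<le> j \<and> j \<le> int m) \<longrightarrow> P j = 0\<^sub>m N N"
    and hQ: "is_orth_proj N Q (orth_compl N
              {x + y | x y. x \<in> eigsp G (\<i> * of_int (int m - 2 * (int n - 1)))
                          \<and> y \<in> eigsp G (\<i> * of_int (int m - 2 * int n))})"
  shows "\<forall>\<psi> \<in> carrier_vec N.
    (let T = (- \<i>) \<cdot>\<^sub>m G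
           + of_nat ((m + 2) * (m - 1)) \<cdot>\<^sub>m P (int n - 1)
           + of_nat (m * (m + 1)) \<cdot>\<^sub>m P (int n)
           + of_nat ((m + 1)^2) \<cdot>\<^sub>m Q
           - complex_of_real ((real m + 4) * (beta1 m)^2) \<cdot>\<^sub>m P (int n - 2)
           - complex_of_real ((real m + 2) * (beta2 m)^2) \<cdot>\<^sub>m P (int n + 1)
           - of_nat (m * (m + 1)) \<cdot>\<^sub>m 1\<^sub>m N
     in Im ((T *\<^sub>v \<psi>) \<bullet>c \<psi>) = 0 \<and> Re ((T *\<^sub>v \<psi>) \<bullet>c \<psi>) \<ge> 0)"
proof -
  interpret S: stp m n N G P Q
    using hm hn hG hGskew hGspec hP hP0 hQ by (simp add: stp_def)
  show ?thesis
  proof (intro ballI)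
    fix \<psi> :: "complex vec" assume psi: "\<psi> \<in> carrier_vec N"
    have h: "Im ((S.T *\<^sub>v \<psi>) \<bullet>c \<psi>) = 0 \<and> Re ((S.T *\<^sub>v \<psi>) \<bullet>c \<psi>) \<ge> 0"
      using S.main_pos[OF psi] by (simp add: less_eq_complex_def)
    show "let T = (- \<i>) \<cdot>\<^sub>m G
           + of_nat ((m + 2) * (m - 1)) \<cdot>\<^sub>m P (int n - 1)
           + of_nat (m * (m + 1)) \<cdot>\<^sub>m P (int n)
           + of_nat ((m + 1)^2) \<cdot>\<^sub>m Q
           - complex_of_real ((real m + 4) * (beta1 m)^2) \<cdot>\<^sub>m P (int n - 2)
           - complex_of_real ((real m + 2) * (beta2 m)^2) \<cdot>\<^sub>m P (int n + 1)
           - of_nat (m * (m + 1)) \<cdot>\<^sub>m 1\<^sub>m N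
     in Im ((T *\<^sub>v \<psi>) \<bullet>c \<psi>) = 0 \<and> Re ((T *\<^sub>v \<psi>) \<bullet>c \<psi>) \<ge> 0"
      unfolding Let_def using h unfolding S.T_def .
  qed
qed


end
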